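(* Let $n\geq 4$ be an integer divisible by $2$ or by $3$. Then $t(n)\leq n-3$.
   Context: For a positive integer $n$ let $S(\mathbb{Z}_n)$ be the set of bijections $\mathbb{Z}_n\to\mathbb{Z}_n$ (identified with $S_n$). For $\pi\in S(\mathbb{Z}_n)$, $\mathrm{cyc}(\pi)$ is the number of cycles (including fixed points) in its cycle decomposition, and $t(\pi)=n-\mathrm{cyc}(\pi)$ is the minimum number of transpositions whose product is $\pi$. The circular class of $\pi$ is $[\pi]=\{x\mapsto \pi(x+b): b\in\mathbb{Z}_n\}$, $t([\pi])=\min_{\sigma\in[\pi]}t(\sigma)$, and $t(n)=\max_{\pi\in S(\mathbb{Z}_n)}t([\pi])$. *)

theory Defs
  imports "HOL-Combinatorics.Permutations"
begin

text \<open>Z_n is modelled as {0..<n} :: nat set with arithmetic mod n. A bijection of Z_n is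
  a function p :: nat => nat with p permutes {0..<n} (identity outside).\<close>

definition cyc_orbit :: "(nat \<Rightarrow> nat) \<Rightarrow> nat \<Rightarrow> nat set" where
  "cyc_orbit p x = {y. \<exists>k. (p ^^ k) x = y}"

definition cyc :: "nat \<Rightarrow> (nat \<Rightarrow> nat) \<Rightarrow> nat" where
  "cyc n p = card (cyc_orbit p ` {0..<n})"

definition tperm :: "nat \<Rightarrow> (nat \<Rightarrow> nat) \<Rightarrow> nat" where
  "tperm n p = n - cyc n p"

definition rot :: "nat \<Rightarrow> (nat \<Rightarrow> nat) \<Rightarrow> nat \<Rightarrow> (nat \<Rightarrow> nat)" where
  "rot n p b = (\<lambda>x. if x < n then p ((x + b) mod n) else x)"

definition circ_class :: "nat \<Rightarrow> (nat \<Rightarrow> nat) \<Rightarrow> (nat \<Rightarrow> nat) set" where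
  "circ_class n p = rot n p ` {0..<n}"

definition tclass :: "nat \<Rightarrow> (nat \<Rightarrow> nat) \<Rightarrow> nat" where
  "tclass n p = Min (tperm n ` circ_class n p)"

definition tn :: "nat \<Rightarrow> nat" where
  "tn n = Max (tclass n ` {p. p permutes {0..<n}})"

end

theory Submission
  imports Defs
begin

lemma orb_self: "x \<in> cyc_orbit q x"
  unfolding cyc_orbit_def by (auto intro: exI[of _ 0])

lemma orb_fix: assumes "q x = x" shows "cyc_orbit q x = {x}"
proof -
  have "(q ^^ k) x = x" for k by (induction k) (auto simp: assms)
  thus ?thesis unfolding cyc_orbit_def by auto
qed

lemma orb_swap: assumes "q x = u" "q u = x" shows "cyc_orbit q x \<subseteq> {x, u}"
proof -
  have "(q ^^ k) x \<in> {x, u}" for k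
  proof (induction k)
    case (Suc k)
    then show ?case using assms by (metis funpow.simps(2) comp_apply insertCI insertE singletonD)
  qed simp
  thus ?thesis unfolding cyc_orbit_def by auto
qed

lemma three_orbits:
  assumes "a < n" "b < n" "c < n" "cyc_orbit q a \<noteq> cyc_orbit q b"
    "cyc_orbit q a \<noteq> cyc_orbit q c" "cyc_orbit q b \<noteq> cyc_orbit q c"
  shows "3 \<le> cyc n q"
proof -
  have sub: "{cyc_orbit q a, cyc_orbit q b, cyc_orbit q c} \<subseteq> cyc_orbit q ` {0..<n}"
    using assms by auto
  have "card {cyc_orbit q a, cyc_orbit q b, cyc_orbit q c} = 3" using assms by auto
  moreover have "card {cyc_orbit q a, cyc_orbit q b, cyc_orbit q c} \<le> card (cyc_orbit q ` {0..<n})"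
    by (rule card_mono[OF _ sub]) auto
  ultimately show ?thesis unfolding cyc_def by simp
qed

lemma exists_other:
  assumes "(4::nat) \<le> n"
  shows "\<exists>e<n. e \<noteq> a \<and> e \<noteq> b \<and> e \<noteq> c"
proof (rule ccontr)
  assume "\<not> ?thesis"
  hence "{0..<n} \<subseteq> {a, b, c}" by auto
  hence "card {0..<n} \<le> card {a, b, c}" by (intro card_mono) auto
  also have "\<dots> \<le> 3" by (simp add: card_insert_if)
  finally show False using assms by simp
qed

lemma sum_id_int: "2 * (\<Sum>y\<in>{0..<n}. int y) = int n * (int n - 1)"
  by (induction n) (auto simp: algebra_simps)

lemma sum_sq_int: "6 * (\<Sum>y\<in>{0..<n}. (int y)^2) = int n * (int n - 1) * (2 * int n - 1)"
  by (induction n) (auto simp: algebra_simps power2_eq_square)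

lemma int_mod_nat: "int (a mod n) = int a - int n * int (a div n)"
proof -
  have "a = n * (a div n) + a mod n" by simp
  hence "int a = int n * int (a div n) + int (a mod n)" by (metis of_nat_add of_nat_mult)
  thus ?thesis by simp
qed

lemma main:
  assumes p: "p permutes {0..<n}" and n4: "n \<ge> 4" and dv: "2 dvd n \<or> 3 dvd n"
  shows "\<exists>b<n. 3 \<le> cyc n (rot n p b)"
proof (rule ccontr)
  assume "\<not> ?thesis"
  hence H: "\<And>b. b < n \<Longrightarrow> cyc n (rot n p b) < 3" by auto
  have pin: "\<And>y. y < n \<Longrightarrow> p y < n" using permutes_in_image[OF p] by auto
  have pinj: "inj_on p {0..<n}" using p permutes_inj_on by blast
  define d where "d y = (y + n - p y) mod n" for y
  define g where "g y = (y + p y) mod n" for y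
  have npos: "n > 0" using n4 by simp
  have dlt: "d y < n" for y using npos by (simp add: d_def)
  have glt: "g y < n" for y using npos by (simp add: g_def)
  have fixp: "rot n p (d y) (p y) = p y" if "y < n" for y
  proof -
    have "(p y + d y) mod n = (p y + (y + n - p y)) mod n"
      unfolding d_def by (simp add: mod_add_right_eq)
    also have "p y + (y + n - p y) = y + n" using pin[OF that] by simp
    finally have "(p y + d y) mod n = y" using that by simp
    thus ?thesis using pin[OF that] by (simp add: rot_def)
  qed
  have dinj: "inj_on d {0..<n}"
  proof (rule inj_onI)
    fix y1 y2 assume y1: "y1 \<in> {0..<n}" and y2: "y2 \<in> {0..<n}" and e: "d y1 = d y2"
    show "y1 = y2"
    proof (rule ccontr)
      assume ne: "y1 \<noteq> y2"
      hence pne: "p y1 \<noteq> p y2" using pinj y1 y2 by (meson inj_onD)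
      let ?q = "rot n p (d y1)"
      have f1: "?q (p y1) = p y1" using fixp y1 by simp
      have f2: "?q (p y2) = p y2" using fixp[of y2] y2 e by simp
      obtain c where c: "c < n" "c \<noteq> p y1" "c \<noteq> p y2" "c \<noteq> p y1"
        using exists_other[OF n4] by blast
      have "3 \<le> cyc n ?q"
        apply (rule three_orbits[of "p y1" n "p y2" c])
        using pin y1 y2 c pne orb_fix[of ?q, OF f1] orb_fix[of ?q, OF f2] orb_self[of c ?q]
        by auto
      thus False using H[OF dlt[of y1]] by simp
    qed
  qed
  have dbij: "bij_betw d {0..<n} {0..<n}"
  proof -
    have "d ` {0..<n} \<subseteq> {0..<n}" using dlt by auto
    hence "d ` {0..<n} = {0..<n}" using endo_inj_surj dinj by blast
    thus ?thesis using dinj by (simp add: bij_betw_def)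
  qed
  have ginj: "inj_on g {0..<n}"
  proof (rule inj_onI)
    fix y z assume y: "y \<in> {0..<n}" and z: "z \<in> {0..<n}" and e: "g y = g z"
    show "y = z"
    proof (rule ccontr)
      assume ne: "y \<noteq> z"
      hence pne: "p y \<noteq> p z" using pinj y z by (meson inj_onD)
      define b where "b = (z + n - p y) mod n"
      let ?q = "rot n p b"
      have blt: "b < n" using npos by (simp add: b_def)
      have s1: "?q (p y) = p z"
      proof -
        have "(p y + b) mod n = (p y + (z + n - p y)) mod n"
          unfolding b_def by (simp add: mod_add_right_eq)
        also have "p y + (z + n - p y) = z + n" using pin[of y] y by simp
        finally have "(p y + b) mod n = z" using z by simp
        thus ?thesis using pin[of y] y by (simp add: rot_def)
      qed
      have s2: "?q (p z) = p y"
      proof -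
        have "(p z + b) mod n = (p z + (z + n - p y)) mod n"
          unfolding b_def by (simp add: mod_add_right_eq)
        also have "p z + (z + n - p y) = (z + p z) + (n - p y)" using pin[of y] y by simp
        also have "((z + p z) + (n - p y)) mod n = ((y + p y) + (n - p y)) mod n"
          using e unfolding g_def by (metis mod_add_left_eq)
        also have "(y + p y) + (n - p y) = y + n" using pin[of y] y by simp
        finally have "(p z + b) mod n = y" using y by simp
        thus ?thesis using pin[of z] z by (simp add: rot_def)
      qed
      have "b \<in> d ` {0..<n}" using dbij blt by (simp add: bij_betw_def)
      then obtain w0 where w0: "w0 < n" "d w0 = b" by auto
      have fw: "?q (p w0) = p w0" using fixp[OF w0(1)] w0(2) by simp
      have w1: "p w0 \<noteq> p y" using fw s1 pne by auto
      have w2: "p w0 \<noteq> p z" using fw s2 pne by auto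
      obtain c where c: "c < n" "c \<noteq> p w0" "c \<noteq> p y" "c \<noteq> p z"
        using exists_other[OF n4] by blast
      have "3 \<le> cyc n ?q"
        apply (rule three_orbits[of "p w0" n "p y" c])
        using pin w0 y z c w1 w2 orb_fix[of ?q, OF fw] orb_swap[of ?q, OF s1 s2]
          orb_self[of c ?q] orb_self[of "p y" ?q]
        by auto
      thus False using H[OF blt] by simp
    qed
  qed
  have gbij: "bij_betw g {0..<n} {0..<n}"
  proof -
    have "g ` {0..<n} \<subseteq> {0..<n}" using glt by auto
    hence "g ` {0..<n} = {0..<n}" using endo_inj_surj ginj by blast
    thus ?thesis using ginj by (simp add: bij_betw_def)
  qed
  have pbij: "bij_betw p {0..<n} {0..<n}" using p by (rule permutes_imp_bij)
  define K1 where "K1 y = 1 - int ((y + n - p y) div n)" for y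
  define K2 where "K2 y = - int ((y + p y) div n)" for y
  have dK: "int (d y) = int y - int (p y) + int n * K1 y" if "y < n" for y
  proof -
    have "int (d y) = int (y + n - p y) - int n * int ((y + n - p y) div n)"
      unfolding d_def by (rule int_mod_nat)
    also have "int (y + n - p y) = int y + int n - int (p y)" using pin[OF that] by simp
    finally show ?thesis unfolding K1_def by (simp add: algebra_simps)
  qed
  have gK: "int (g y) = int y + int (p y) + int n * K2 y" for y
    unfolding g_def K2_def by (simp add: int_mod_nat)
  have sd: "(\<Sum>y\<in>{0..<n}. F (d y)) = (\<Sum>y\<in>{0..<n}. F y)" for F :: "nat \<Rightarrow> int"
    using sum.reindex_bij_betw[OF dbij] by blast
  have sg: "(\<Sum>y\<in>{0..<n}. F (g y)) = (\<Sum>y\<in>{0..<n}. F y)" for F :: "nat \<Rightarrow> int"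
    using sum.reindex_bij_betw[OF gbij] by blast
  have sp: "(\<Sum>y\<in>{0..<n}. F (p y)) = (\<Sum>y\<in>{0..<n}. F y)" for F :: "nat \<Rightarrow> int"
    using sum.reindex_bij_betw[OF pbij] by blast
  show False
  proof (cases "2 dvd n")
    case True
    have "(\<Sum>y\<in>{0..<n}. int (d y)) = (\<Sum>y\<in>{0..<n}. int y - int (p y) + int n * K1 y)"
      using dK by (intro sum.cong) auto
    also have "\<dots> = (\<Sum>y\<in>{0..<n}. int y) - (\<Sum>y\<in>{0..<n}. int (p y)) + int n * (\<Sum>y\<in>{0..<n}. K1 y)"
      by (simp add: sum.distrib sum_subtractf sum_distrib_left)
    finally have "(\<Sum>y\<in>{0..<n}. int y) = int n * (\<Sum>y\<in>{0..<n}. K1 y)"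
      unfolding sd[of int] sp[of int] by linarith
    hence "int n * (int n - 1) = int n * (2 * (\<Sum>y\<in>{0..<n}. K1 y))"
    proof -
      have "int n * (int n - 1) = 2 * (\<Sum>y\<in>{0..<n}. int y)" using sum_id_int[of n] by simp
      also have "\<dots> = 2 * (int n * (\<Sum>y\<in>{0..<n}. K1 y))" using \<open>(\<Sum>y\<in>{0..<n}. int y) = _\<close> by simp
      also have "\<dots> = int n * (2 * (\<Sum>y\<in>{0..<n}. K1 y))" by (rule mult.left_commute)
      finally show ?thesis .
    qed
    hence "2 * (\<Sum>y\<in>{0..<n}. K1 y) = int n - 1" using npos by simp
    moreover obtain m where "n = 2 * m" using True by auto
    moreover have "\<forall>m K. n = 2 * m \<longrightarrow> 2 * (K::int) \<noteq> int n - 1" by presburger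
    ultimately show False by blast
  next
    case False
    hence "3 dvd n" using dv by simp
    then obtain m where m: "n = 3 * m" by auto
    define S where "S = (\<Sum>y\<in>{0..<n}. (int y)^2)"
    define X where "X = (\<Sum>y\<in>{0..<n}. 2 * (int y - int (p y)) * K1 y + int n * (K1 y)^2)"
    define Y where "Y = (\<Sum>y\<in>{0..<n}. 2 * (int y + int (p y)) * K2 y + int n * (K2 y)^2)"
    have "S = (\<Sum>y\<in>{0..<n}. (int (d y))^2)" using sd[of "\<lambda>y. (int y)^2"] by (simp add: S_def)
    also have "\<dots> = (\<Sum>y\<in>{0..<n}. (int y - int (p y))^2 + int n * (2 * (int y - int (p y)) * K1 y + int n * (K1 y)^2))"
      by (intro sum.cong refl) (simp add: dK power2_eq_square algebra_simps)
    also have "\<dots> = (\<Sum>y\<in>{0..<n}. (int y - int (p y))^2) + int n * X"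
      by (simp add: X_def sum.distrib flip: sum_distrib_left)
    finally have e1: "S = (\<Sum>y\<in>{0..<n}. (int y - int (p y))^2) + int n * X" .
    have "S = (\<Sum>y\<in>{0..<n}. (int (g y))^2)" using sg[of "\<lambda>y. (int y)^2"] by (simp add: S_def)
    also have "\<dots> = (\<Sum>y\<in>{0..<n}. (int y + int (p y))^2 + int n * (2 * (int y + int (p y)) * K2 y + int n * (K2 y)^2))"
      by (intro sum.cong refl) (simp add: gK power2_eq_square algebra_simps)
    also have "\<dots> = (\<Sum>y\<in>{0..<n}. (int y + int (p y))^2) + int n * Y"
      by (simp add: Y_def sum.distrib flip: sum_distrib_left)
    finally have e2: "S = (\<Sum>y\<in>{0..<n}. (int y + int (p y))^2) + int n * Y" .
    have "(\<Sum>y\<in>{0..<n}. (int y - int (p y))^2) + (\<Sum>y\<in>{0..<n}. (int y + int (p y))^2)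
        = (\<Sum>y\<in>{0..<n}. 2 * (int y)^2 + 2 * (int (p y))^2)"
      by (simp add: sum.distrib[symmetric] power2_eq_square algebra_simps)
    also have "\<dots> = 2 * S + 2 * S"
      using sp[of "\<lambda>y. (int y)^2"] by (simp add: S_def sum.distrib flip: sum_distrib_left)
    finally have "2 * S = - int n * (X + Y)" using e1 e2 by (simp add: algebra_simps)
    hence "int n * (int n - 1) * (2 * int n - 1) = int n * (- 3 * (X + Y))"
      using sum_sq_int[of n] by (simp add: S_def algebra_simps)
    hence "(int n - 1) * (2 * int n - 1) = - 3 * (X + Y)" using npos by simp
    hence "(3 * int m - 1) * (6 * int m - 1) = - 3 * (X + Y)" using m by simp
    hence "3 * (6 * int m * int m - 3 * int m + X + Y) = -1" by (simp add: algebra_simps)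
    moreover have "\<forall>T::int. 3 * T \<noteq> -1" by presburger
    ultimately show False by blast
  qed
qed

theorem theorem1p3:
  fixes n :: nat
  assumes "n \<ge> 4" and "2 dvd n \<or> 3 dvd n"
  shows "tn n \<le> n - 3"
proof -
  have cl: "tclass n p \<le> n - 3" if p: "p permutes {0..<n}" for p
  proof -
    obtain b where b: "b < n" "3 \<le> cyc n (rot n p b)" using main[OF p assms] by blast
    have "tperm n (rot n p b) \<in> tperm n ` circ_class n p"
      using b by (auto simp: circ_class_def)
    hence "tclass n p \<le> tperm n (rot n p b)" unfolding tclass_def
      by (intro Min_le) (auto simp: circ_class_def)
    also have "\<dots> \<le> n - 3" using b by (simp add: tperm_def)
    finally show ?thesis .
  qed
  have fin: "finite {p. p permutes {0..<n}}" by (rule finite_permutations) simp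
  have ne: "{p. p permutes {0..<n}} \<noteq> {}" using permutes_id by blast
  show ?thesis unfolding tn_def using fin ne cl by (subst Max_le_iff) auto
qed

end
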